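(* Suppose $n$ is even, $n_t=n_c=n/2$, and $W$ is the output of pair-switching rerandomization (PSRR) with threshold $a>0$ and tuning parameter $\gamma\ge 0$, assumed to terminate almost surely. Then for every $w\in\{0,1\}^n$ with $\sum_iw_i=n/2$, $P(W=w)=P(W=\mathbf 1-w)$; consequently $P(W_i=1)=P(W_i=0)=1/2$ for every $i$.
   Context: Covariates $X_1,\dots,X_n\in\mathbb R^p$ are fixed, with sample covariance matrix $S_{XX}=(n-1)^{-1}\sum_i(X_i-\overline X)(X_i-\overline X)^{\mathrm T}$ invertible, $\overline X=n^{-1}\sum_iX_i$. For an assignment $W\in\{0,1\}^n$ with $n_t$ ones, the Mahalanobis distance is $M(W)=n_t(1-n_t/n)(\overline X_t-\overline X_c)^{\mathrm T}S_{XX}^{-1}(\overline X_t-\overline X_c)$ with $\overline X_t=n_t^{-1}\sum_{i:W_i=1}X_i$, $\overline X_c=n_c^{-1}\sum_{i:W_i=0}X_i$. PSRR: draw $W^{(0)}$ uniformly among assignments with $n_t$ ones; set $t=0$, $M^{(0)}=M(W^{(0)})$. While $M^{(t)}>a$: choose uniformly at random one index $i$ with $W^{(t)}_i=1$ and one index $j$ with $W^{(t)}_j=0$, let $W^*$ be $W^{(t)}$ with entries $i,j$ swapped, $M^*=M(W^* )$; with probability $\min\{(M^{(t)}/M^* )^\gamma,1\}$ set $W^{(t+1)}=W^*$, $M^{(t+1)}=M^*$, $t\leftarrow t+1$ (otherwise keep the current state and try again). Output $W=W^{(t)}$ once $M^{(t)}\le a$. *)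

theory Defs
  imports "HOL-Probability.Probability"
begin

text \<open>Assignments W in {0,1}^n are represented by the set of treated units
  T = {i < n. W_i = 1}, a subset of {..<n}.\<close>

definition assignments :: "nat \<Rightarrow> nat \<Rightarrow> nat set set" where
  "assignments n nt = {T. T \<subseteq> {..<n} \<and> card T = nt}"

definition xbar :: "(nat \<Rightarrow> real^'p) \<Rightarrow> nat \<Rightarrow> real^'p" where
  "xbar X n = (1 / real n) *\<^sub>R (\<Sum>i<n. X i)"

definition sample_cov :: "(nat \<Rightarrow> real^'p) \<Rightarrow> nat \<Rightarrow> real^'p^'p" where
  "sample_cov X n = (\<chi> j k. (1 / (real n - 1)) *
      (\<Sum>i<n. (X i - xbar X n) $ j * (X i - xbar X n) $ k))"

definition mahalanobis :: "(nat \<Rightarrow> real^'p) \<Rightarrow> nat \<Rightarrow> nat \<Rightarrow> nat set \<Rightarrow> real" where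
  "mahalanobis X n nt T =
     (let Xt = (1 / real nt) *\<^sub>R (\<Sum>i\<in>T. X i);
          Xc = (1 / real (n - nt)) *\<^sub>R (\<Sum>i\<in>{..<n} - T. X i);
          d = Xt - Xc
      in real nt * (1 - real nt / real n) * (d \<bullet> (matrix_inv (sample_cov X n) *v d)))"

text \<open>Acceptance probability min{(M/M*)^\<gamma>, 1}; when M* = 0 the ratio is +\<infinity>
  (M > a > 0 in the loop), so the move is accepted with probability 1.\<close>
definition accept_prob :: "real \<Rightarrow> real \<Rightarrow> real \<Rightarrow> real" where
  "accept_prob \<gamma> M Ms = (if Ms = 0 then 1 else min ((M / Ms) powr \<gamma>) 1)"

definition psrr_step :: "(nat \<Rightarrow> real^'p) \<Rightarrow> nat \<Rightarrow> nat \<Rightarrow> real \<Rightarrow> nat set \<Rightarrow> nat set pmf" where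
  "psrr_step X n nt \<gamma> T =
     do { i \<leftarrow> pmf_of_set T;
          j \<leftarrow> pmf_of_set ({..<n} - T);
          let T' = insert j (T - {i});
          b \<leftarrow> bernoulli_pmf (accept_prob \<gamma> (mahalanobis X n nt T) (mahalanobis X n nt T'));
          return_pmf (if b then T' else T) }"

text \<open>Loop with the stopping rule: states with M \<le> a are absorbing.\<close>
definition psrr_kernel :: "(nat \<Rightarrow> real^'p) \<Rightarrow> nat \<Rightarrow> nat \<Rightarrow> real \<Rightarrow> real \<Rightarrow> nat set \<Rightarrow> nat set pmf" where
  "psrr_kernel X n nt a \<gamma> T =
     (if mahalanobis X n nt T \<le> a then return_pmf T else psrr_step X n nt \<gamma> T)"

definition psrr_state :: "(nat \<Rightarrow> real^'p) \<Rightarrow> nat \<Rightarrow> nat \<Rightarrow> real \<Rightarrow> real \<Rightarrow> nat \<Rightarrow> nat set pmf" where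
  "psrr_state X n nt a \<gamma> t =
     ((\<lambda>d. bind_pmf d (psrr_kernel X n nt a \<gamma>)) ^^ t) (pmf_of_set (assignments n nt))"

definition psrr_terminates :: "(nat \<Rightarrow> real^'p) \<Rightarrow> nat \<Rightarrow> nat \<Rightarrow> real \<Rightarrow> real \<Rightarrow> bool" where
  "psrr_terminates X n nt a \<gamma> \<longleftrightarrow>
     (\<lambda>t. measure_pmf.prob (psrr_state X n nt a \<gamma> t) {T. mahalanobis X n nt T \<le> a})
        \<longlonglongrightarrow> 1"

text \<open>P(W = w) for the output W: probability of having stopped at w.\<close>
definition psrr_out_prob :: "(nat \<Rightarrow> real^'p) \<Rightarrow> nat \<Rightarrow> nat \<Rightarrow> real \<Rightarrow> real \<Rightarrow> nat set \<Rightarrow> real" where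
  "psrr_out_prob X n nt a \<gamma> w =
     (if mahalanobis X n nt w \<le> a then lim (\<lambda>t. pmf (psrr_state X n nt a \<gamma> t) w) else 0)"

end

theory Submission
  imports Defs
begin

lemma maha_compl:
  assumes "even n" "T \<subseteq> {..<n}"
  shows "mahalanobis X n (n div 2) ({..<n} - T) = mahalanobis X n (n div 2) T"
proof -
  have e: "n - n div 2 = n div 2" using assms(1) by auto
  have dd: "{..<n} - ({..<n} - T) = T" using assms(2) by auto
  have neg: "\<And>(A::real^'a^'a) d. (- d) \<bullet> (A *v (- d)) = d \<bullet> (A *v d)"
    by (simp add: vec.neg)
  show ?thesis
    unfolding mahalanobis_def Let_def e dd
    by (metis minus_diff_eq neg)
qed

lemma assign_facts:
  assumes "even n" "n \<noteq> 0" "T \<in> assignments n (n div 2)"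
  shows "T \<subseteq> {..<n}" "finite T" "T \<noteq> {}" "finite ({..<n} - T)" "{..<n} - T \<noteq> {}"
    "card ({..<n} - T) = n div 2" "{..<n} - T \<in> assignments n (n div 2)"
proof -
  show 1: "T \<subseteq> {..<n}" using assms(3) by (simp add: assignments_def)
  show 2: "finite T" using 1 finite_subset by blast
  have c: "card T = n div 2" using assms(3) by (simp add: assignments_def)
  have pos: "n div 2 > 0" using assms(1,2) by auto
  show "T \<noteq> {}" using c pos by auto
  show "finite ({..<n} - T)" by simp
  have e: "n - n div 2 = n div 2" using assms(1) by auto
  show c2: "card ({..<n} - T) = n div 2" using c 1 2 e by (simp add: card_Diff_subset)
  show "{..<n} - T \<noteq> {}" using c2 pos by (metis card.empty less_irrefl)
  show "{..<n} - T \<in> assignments n (n div 2)" using c2 by (simp add: assignments_def)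
qed

lemma swap_in:
  assumes "even n" "n \<noteq> 0" "T \<in> assignments n (n div 2)" "i \<in> T" "j \<in> {..<n} - T"
  shows "insert j (T - {i}) \<in> assignments n (n div 2)"
proof -
  have 1: "T \<subseteq> {..<n}" "finite T" "card T = n div 2"
    using assms(3) finite_subset by (auto simp: assignments_def)
  have "card (insert j (T - {i})) = card (T - {i}) + 1"
    using 1 assms(4,5) by (simp add: card_insert_if)
  also have "\<dots> = card T" using 1 assms(4) card_Diff1_le
    by (metis One_nat_def Suc_pred card_Diff_singleton card_gt_0_iff empty_iff Suc_eq_plus1)
  finally show ?thesis using 1 assms by (auto simp: assignments_def)
qed

lemma step_set:
  assumes "even n" "n \<noteq> 0" "T \<in> assignments n (n div 2)"
  shows "set_pmf (psrr_step X n (n div 2) \<gamma> T) \<subseteq> assignments n (n div 2)"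
  using assign_facts[OF assms] swap_in[OF assms] assms(3)
  by (auto simp: psrr_step_def Let_def set_bind_pmf split: if_split_asm)

lemma kernel_set:
  assumes "even n" "n \<noteq> 0" "T \<in> assignments n (n div 2)"
  shows "set_pmf (psrr_kernel X n (n div 2) a \<gamma> T) \<subseteq> assignments n (n div 2)"
  using step_set[OF assms] assms(3) by (auto simp: psrr_kernel_def)

lemma step_compl:
  assumes "even n" "n \<noteq> 0" "T \<in> assignments n (n div 2)"
  shows "psrr_step X n (n div 2) \<gamma> ({..<n} - T)
       = map_pmf (\<lambda>S. {..<n} - S) (psrr_step X n (n div 2) \<gamma> T)"
proof -
  note f = assign_facts[OF assms]
  let ?C = "{..<n} - T"
  let ?M = "mahalanobis X n (n div 2)"
  have dd: "{..<n} - ?C = T" using f(1) by auto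
  have inner: "(let T' = insert i (?C - {j})
        in bernoulli_pmf (accept_prob \<gamma> (?M ?C) (?M T')) \<bind> (\<lambda>b. return_pmf (if b then T' else ?C)))
      = map_pmf ((-) {..<n}) (let T' = insert j (T - {i})
        in bernoulli_pmf (accept_prob \<gamma> (?M T) (?M T')) \<bind> (\<lambda>b. return_pmf (if b then T' else T)))"
    if ij: "j \<in> ?C" "i \<in> T" for i j
  proof -
    have e1: "insert i (?C - {j}) = {..<n} - insert j (T - {i})" using ij f(1) by auto
    have sub: "insert j (T - {i}) \<subseteq> {..<n}" using ij f(1) by auto
    show ?thesis unfolding Let_def e1 map_bind_pmf
      by (simp add: maha_compl[OF assms(1) sub] maha_compl[OF assms(1) f(1)], rule bind_pmf_cong, auto)
  qed
  have "map_pmf ((-) {..<n}) (psrr_step X n (n div 2) \<gamma> T)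
     = pmf_of_set T \<bind> (\<lambda>i. pmf_of_set ?C \<bind> (\<lambda>j. map_pmf ((-) {..<n}) (let T' = insert j (T - {i})
        in bernoulli_pmf (accept_prob \<gamma> (?M T) (?M T')) \<bind> (\<lambda>b. return_pmf (if b then T' else T)))))"
    unfolding psrr_step_def map_bind_pmf ..
  also have "\<dots> = pmf_of_set ?C \<bind> (\<lambda>j. pmf_of_set T \<bind> (\<lambda>i. map_pmf ((-) {..<n}) (let T' = insert j (T - {i})
        in bernoulli_pmf (accept_prob \<gamma> (?M T) (?M T')) \<bind> (\<lambda>b. return_pmf (if b then T' else T)))))"
    by (rule bind_commute_pmf)
  also have "\<dots> = psrr_step X n (n div 2) \<gamma> ?C"
    unfolding psrr_step_def dd
    by (intro bind_pmf_cong refl) (use f inner in auto)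
  finally show ?thesis by simp
qed

definition cmp :: "nat \<Rightarrow> nat set \<Rightarrow> nat set" where
  "cmp n T = (if T \<subseteq> {..<n} then {..<n} - T else T)"

lemma cmp_cmp: "cmp n (cmp n T) = T"
  unfolding cmp_def by auto

lemma inj_cmp: "inj (cmp n)"
  by (metis cmp_cmp injI)

lemma assign_finite: "finite (assignments n k)"
  by (rule finite_subset[of _ "Pow {..<n}"]) (auto simp: assignments_def)

lemma assign_ne: "assignments n (n div 2) \<noteq> {}"
proof -
  have "{..<n div 2} \<in> assignments n (n div 2)" by (auto simp: assignments_def)
  then show ?thesis by blast
qed

lemma cmp_assign: "T \<in> assignments n k \<Longrightarrow> cmp n T = {..<n} - T"
  by (simp add: cmp_def assignments_def)

lemma cmp_image:
  assumes "even n" "n \<noteq> 0"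
  shows "cmp n ` assignments n (n div 2) = assignments n (n div 2)"
proof
  show "cmp n ` assignments n (n div 2) \<subseteq> assignments n (n div 2)"
    using assign_facts[OF assms] cmp_assign by auto
  show "assignments n (n div 2) \<subseteq> cmp n ` assignments n (n div 2)"
  proof
    fix T assume T: "T \<in> assignments n (n div 2)"
    then have "cmp n T \<in> assignments n (n div 2)"
      using assign_facts[OF assms T] cmp_assign by auto
    moreover have "T = cmp n (cmp n T)" by (simp add: cmp_cmp)
    ultimately show "T \<in> cmp n ` assignments n (n div 2)" by blast
  qed
qed

lemma state_Suc: "psrr_state X n nt a \<gamma> (Suc t) = bind_pmf (psrr_state X n nt a \<gamma> t) (psrr_kernel X n nt a \<gamma>)"
  by (simp add: psrr_state_def)

lemma state_set:
  assumes "even n" "n \<noteq> 0"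
  shows "set_pmf (psrr_state X n (n div 2) a \<gamma> t) \<subseteq> assignments n (n div 2)"
proof (induction t)
  case 0
  then show ?case using assign_finite assign_ne by (simp add: psrr_state_def)
next
  case (Suc t)
  then show ?case using kernel_set[OF assms] by (fastforce simp: state_Suc set_bind_pmf)
qed

lemma kernel_compl:
  assumes "even n" "n \<noteq> 0" "T \<in> assignments n (n div 2)"
  shows "psrr_kernel X n (n div 2) a \<gamma> (cmp n T) = map_pmf (cmp n) (psrr_kernel X n (n div 2) a \<gamma> T)"
proof -
  note f = assign_facts[OF assms]
  have c: "cmp n T = {..<n} - T" using cmp_assign[OF assms(3)] .
  have "map_pmf (cmp n) (psrr_step X n (n div 2) \<gamma> T) = map_pmf (\<lambda>S. {..<n} - S) (psrr_step X n (n div 2) \<gamma> T)"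
    by (rule map_pmf_cong[OF refl]) (use step_set[OF assms] cmp_assign in blast)
  then show ?thesis
    unfolding psrr_kernel_def
    using step_compl[OF assms, of X \<gamma>] by (simp add: c maha_compl[OF assms(1) f(1)])
qed

lemma state_sym:
  assumes "even n" "n \<noteq> 0"
  shows "map_pmf (cmp n) (psrr_state X n (n div 2) a \<gamma> t) = psrr_state X n (n div 2) a \<gamma> t"
proof (induction t)
  case 0
  show ?case unfolding psrr_state_def funpow_0
    using map_pmf_of_set_inj[OF inj_on_subset[OF inj_cmp] assign_ne assign_finite] cmp_image[OF assms]
    by simp
next
  case (Suc t)
  let ?S = "psrr_state X n (n div 2) a \<gamma> t"
  let ?K = "psrr_kernel X n (n div 2) a \<gamma>"
  have "map_pmf (cmp n) (bind_pmf ?S ?K) = bind_pmf ?S (\<lambda>T. map_pmf (cmp n) (?K T))"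
    by (rule map_bind_pmf)
  also have "\<dots> = bind_pmf ?S (\<lambda>T. ?K (cmp n T))"
  proof (rule bind_pmf_cong[OF refl])
    fix T assume "T \<in> set_pmf ?S"
    then have "T \<in> assignments n (n div 2)" using state_set[OF assms] by blast
    then show "map_pmf (cmp n) (?K T) = ?K (cmp n T)" using kernel_compl[OF assms, of T X a \<gamma>] by simp
  qed
  also have "\<dots> = bind_pmf (map_pmf (cmp n) ?S) ?K" by (simp add: bind_map_pmf)
  also have "\<dots> = bind_pmf ?S ?K" using Suc.IH by simp
  finally show ?case by (simp add: state_Suc)
qed

lemma pmf_sym:
  assumes "even n" "n \<noteq> 0"
  shows "pmf (psrr_state X n (n div 2) a \<gamma> t) (cmp n w) = pmf (psrr_state X n (n div 2) a \<gamma> t) w"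
  using pmf_map_inj'[OF inj_cmp, of n "psrr_state X n (n div 2) a \<gamma> t" w]
  by (simp only: state_sym[OF assms])

lemma pmf_mono:
  assumes "even n" "n \<noteq> 0" "mahalanobis X n (n div 2) w \<le> a"
  shows "pmf (psrr_state X n (n div 2) a \<gamma> t) w \<le> pmf (psrr_state X n (n div 2) a \<gamma> (Suc t)) w"
proof (cases "w \<in> assignments n (n div 2)")
  case False
  then have "w \<notin> set_pmf (psrr_state X n (n div 2) a \<gamma> t)" using state_set[OF assms(1,2)] by blast
  then show ?thesis by (simp add: set_pmf_eq)
next
  case True
  let ?S = "psrr_state X n (n div 2) a \<gamma> t"
  let ?K = "psrr_kernel X n (n div 2) a \<gamma>"
  let ?A = "assignments n (n div 2)"
  have "pmf (bind_pmf ?S ?K) w = (\<Sum>T\<in>?A. pmf (?K T) w * pmf ?S T)"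
    unfolding pmf_bind
    by (rule integral_measure_pmf_real[OF assign_finite]) (use state_set[OF assms(1,2)] in blast)
  also have "\<dots> \<ge> pmf (?K w) w * pmf ?S w"
    by (rule member_le_sum) (use True assign_finite in auto)
  also have "pmf (?K w) w = 1" using assms(3) by (simp add: psrr_kernel_def)
  finally show ?thesis by (simp add: state_Suc)
qed

theorem mainTheorem3:
  fixes X :: "nat \<Rightarrow> real^'p" and n :: nat and a \<gamma> :: real
  assumes "even n"
    and "invertible (sample_cov X n)"
    and "a > 0" and "\<gamma> \<ge> 0"
    and "psrr_terminates X n (n div 2) a \<gamma>"
  shows "(\<forall>w \<in> assignments n (n div 2).
            psrr_out_prob X n (n div 2) a \<gamma> w
              = psrr_out_prob X n (n div 2) a \<gamma> ({..<n} - w))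
       \<and> (\<forall>i<n. (\<Sum>w\<in>{w \<in> assignments n (n div 2). i \<in> w}. psrr_out_prob X n (n div 2) a \<gamma> w) = 1 / 2
              \<and> (\<Sum>w\<in>{w \<in> assignments n (n div 2). i \<notin> w}. psrr_out_prob X n (n div 2) a \<gamma> w) = 1 / 2)"
proof -
  have n0: "n \<noteq> 0"
  proof
    assume "n = 0"
    then have z: "sample_cov X n = 0" by (simp add: sample_cov_def vec_eq_iff)
    obtain B :: "real^'p^'p" where "(0::real^'p^'p) ** B = mat 1"
      using assms(2) unfolding z invertible_def by blast
    then have "(mat 1::real^'p^'p) = 0" by (simp add: matrix_matrix_mult_def vec_eq_iff)
    then have "(mat 1::real^'p^'p) $ undefined $ undefined = 0 $ undefined $ undefined" by simp
    then show False by (simp add: mat_def)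
  qed
  note ev = assms(1) n0
  define A where "A = assignments n (n div 2)"
  define M where "M = mahalanobis X n (n div 2)"
  define f where "f = psrr_out_prob X n (n div 2) a \<gamma>"
  define p where "p = (\<lambda>t w. pmf (psrr_state X n (n div 2) a \<gamma> t) w)"
  have fin: "finite A" unfolding A_def by (rule assign_finite)
  have sym: "f w = f ({..<n} - w)" if w: "w \<in> A" for w
  proof -
    have cm: "cmp n w = {..<n} - w" using w cmp_assign unfolding A_def by blast
    have sub: "w \<subseteq> {..<n}" using assign_facts[OF ev] w unfolding A_def by blast
    have "p t ({..<n} - w) = p t w" for t
      unfolding p_def cm[symmetric] by (rule pmf_sym[OF ev])
    then show ?thesis
      unfolding f_def psrr_out_prob_def using maha_compl[OF assms(1) sub, of X]
      by (simp add: p_def)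
  qed
  have conv: "(\<lambda>t. p t w) \<longlonglongrightarrow> lim (\<lambda>t. p t w)" if "M w \<le> a" for w
  proof -
    have "incseq (\<lambda>t. p t w)"
      by (rule incseq_SucI) (use pmf_mono[OF ev] that in \<open>simp add: p_def M_def\<close>)
    moreover have "\<forall>t. p t w \<le> 1" by (simp add: p_def pmf_le_1)
    ultimately obtain L where "(\<lambda>t. p t w) \<longlonglongrightarrow> L" using incseq_convergent by blast
    then show ?thesis by (simp add: limI)
  qed
  have lim1: "(\<lambda>t. \<Sum>w\<in>A. if M w \<le> a then p t w else 0) \<longlonglongrightarrow> (\<Sum>w\<in>A. f w)"
  proof (rule tendsto_sum)
    fix w assume "w \<in> A"
    show "(\<lambda>t. if M w \<le> a then p t w else 0) \<longlonglongrightarrow> f w"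
      using conv[of w] by (cases "M w \<le> a") (auto simp: f_def psrr_out_prob_def M_def p_def)
  qed
  have eq: "(\<Sum>w\<in>A. if M w \<le> a then p t w else 0)
      = measure_pmf.prob (psrr_state X n (n div 2) a \<gamma> t) {T. M T \<le> a}" for t
  proof -
    let ?S = "psrr_state X n (n div 2) a \<gamma> t"
    have "(\<Sum>w\<in>A. if M w \<le> a then p t w else 0) = sum (pmf ?S) {w\<in>A. M w \<le> a}"
      using fin unfolding p_def by (simp add: sum.inter_filter)
    also have "\<dots> = measure_pmf.prob ?S {w\<in>A. M w \<le> a}"
      using fin by (simp add: measure_measure_pmf_finite)
    also have "\<dots> = measure_pmf.prob ?S ({w\<in>A. M w \<le> a} \<inter> set_pmf ?S)"
      by (simp add: measure_Int_set_pmf)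
    also have "{w\<in>A. M w \<le> a} \<inter> set_pmf ?S = {T. M T \<le> a} \<inter> set_pmf ?S"
      using state_set[OF ev] unfolding A_def by blast
    also have "measure_pmf.prob ?S \<dots> = measure_pmf.prob ?S {T. M T \<le> a}"
      by (simp add: measure_Int_set_pmf)
    finally show ?thesis .
  qed
  have total: "(\<Sum>w\<in>A. f w) = 1"
  proof (rule LIMSEQ_unique[OF lim1])
    show "(\<lambda>t. \<Sum>w\<in>A. if M w \<le> a then p t w else 0) \<longlonglongrightarrow> 1"
      using assms(5) unfolding psrr_terminates_def eq by (simp add: M_def)
  qed
  have halves: "sum f {w\<in>A. i \<in> w} = 1/2 \<and> sum f {w\<in>A. i \<notin> w} = 1/2" if i: "i < n" for i
  proof -
    have same: "sum f {w\<in>A. i \<in> w} = sum f {w\<in>A. i \<notin> w}"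
    proof (rule sum.reindex_bij_witness[of _ "\<lambda>w. {..<n} - w" "\<lambda>w. {..<n} - w"])
      fix w assume w: "w \<in> {w\<in>A. i \<in> w}"
      then have sub: "w \<subseteq> {..<n}" "{..<n} - w \<in> A"
        using assign_facts[OF ev] unfolding A_def by blast+
      show "{..<n} - ({..<n} - w) = w" using sub by blast
      show "{..<n} - w \<in> {w\<in>A. i \<notin> w}" using sub w by blast
      show "f ({..<n} - w) = f w" using sym[of w] w by simp
    next
      fix w assume w: "w \<in> {w\<in>A. i \<notin> w}"
      then have sub: "w \<subseteq> {..<n}" "{..<n} - w \<in> A"
        using assign_facts[OF ev] unfolding A_def by blast+
      show "{..<n} - ({..<n} - w) = w" using sub by blast
      show "{..<n} - w \<in> {w\<in>A. i \<in> w}" using sub w i by blast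
    qed
    have "A = {w\<in>A. i \<in> w} \<union> {w\<in>A. i \<notin> w}" by blast
    then have "sum f A = sum f ({w\<in>A. i \<in> w} \<union> {w\<in>A. i \<notin> w})" by simp
    also have "\<dots> = sum f {w\<in>A. i \<in> w} + sum f {w\<in>A. i \<notin> w}"
      by (rule sum.union_disjoint) (use fin in auto)
    finally show ?thesis using total same by simp
  qed
  show ?thesis
    using sym halves unfolding A_def f_def by blast
qed

end
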